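(* Let $\Sigma=(X,\mathcal{S},\phi)$ be a forward complete dynamical system whose transition map $\phi$ is $\mathcal{S}$-uniformly continuous, and assume there exist $t_1>0$, $G_0>0$ such that $\|\phi(t,x,\sigma)\|\le G_0\|x\|$ for all $t\in[0,t_1]$, $x\in X$, $\sigma\in\mathcal{S}$. Then the following are equivalent: (i) $\Sigma$ is UGES; (ii) there exist a continuous functional $V:X\to\mathbb{R}_+$ and positive reals $p,\underline{c},\overline{c}$ such that $\underline{c}\|x\|^p\le V(x)\le\overline{c}\|x\|^p$ for all $x\in X$ and $\overline{D}_\sigma V(x)\le-\|x\|^p$ for all $x\in X$, $\sigma\in\mathcal{S}$; (iii) there exist a functional $V:X\to\mathbb{R}_+$ and positive reals $p,c$ such that for every $x\in X$ and $\sigma\in\mathcal{S}$ the map $t\mapsto V(\phi(t,x,\sigma))$ is continuous from the left, $\overline{D}_\sigma V(x)\le-\|x\|^p$ for all $x\in X$, $\sigma\in\mathcal{S}$, and $V(x)\le c\|x\|^p$ for all $x\in X$.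
   Context: $(X,\|\cdot\|)$ is a Banach space and $B_X(x,r)$ is the closed ball of center $x$ and radius $r$. Let $\mathcal{Q}$ be a nonempty set and $\mathcal{S}$ a set of functions $\sigma:\mathbb{R}_+\to\mathcal{Q}$ closed by time-shift (for $\sigma\in\mathcal{S}$, $\tau\ge0$, $\mathbb{T}_\tau\sigma:s\mapsto\sigma(\tau+s)$ is in $\mathcal{S}$) and by concatenation (for $\sigma_1,\sigma_2\in\mathcal{S}$, $\tau>0$, the function equal to $\sigma_1$ on $[0,\tau]$ and with $\sigma(\tau+t)=\sigma_2(t)$ for $t>0$ is in $\mathcal{S}$). A triple $\Sigma=(X,\mathcal{S},\phi)$ with $\phi:\mathbb{R}_+\times X\times\mathcal{S}\to X$ is a forward complete dynamical system if: $\phi(0,x,\sigma)=x$; $\phi(t,x,\tilde\sigma)=\phi(t,x,\sigma)$ whenever $\tilde\sigma=\sigma$ on $[0,t]$; $t\mapsto\phi(t,x,\sigma)$ is continuous; $\phi(\tau,\phi(t,x,\sigma),\mathbb{T}_t\sigma)=\phi(t+\tau,x,\sigma)$ for all $t,\tau\ge0$. $\Sigma$ is UGES if there exist $M,\lambda>0$ with $\|\phi(t,x,\sigma)\|\le Me^{-\lambda t}\|x\|$ for all $t\ge0$, $x\in X$, $\sigma\in\mathcal{S}$. The upper Dini derivative is $\overline{D}_\sigma V(x)=\limsup_{h\downarrow0}\frac1h\big(V(\phi(h,x,\sigma))-V(x)\big)$. $\phi$ is $\mathcal{S}$-uniformly continuous if for every $\bar t>0$, $x\in X$, $\varepsilon>0$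 there is $\eta>0$ with $\|\phi(t,x,\sigma)-\phi(t,y,\sigma)\|\le\varepsilon$ for all $t\in[0,\bar t]$, $y\in B_X(x,\eta)$, $\sigma\in\mathcal{S}$. *)

theory Defs
  imports "HOL-Analysis.Analysis"
begin

text \<open>Inputs are modelled as functions real => 'q; only their values on [0,inf) matter.
  Time shift and concatenation.\<close>

definition tshift :: "real \<Rightarrow> (real \<Rightarrow> 'q) \<Rightarrow> (real \<Rightarrow> 'q)" where
  "tshift \<tau> \<sigma> = (\<lambda>s. \<sigma> (\<tau> + s))"

definition concat_at :: "real \<Rightarrow> (real \<Rightarrow> 'q) \<Rightarrow> (real \<Rightarrow> 'q) \<Rightarrow> (real \<Rightarrow> 'q)" where
  "concat_at \<tau> \<sigma>1 \<sigma>2 = (\<lambda>s. if s \<le> \<tau> then \<sigma>1 s else \<sigma>2 (s - \<tau>))"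

definition admissible_inputs :: "(real \<Rightarrow> 'q) set \<Rightarrow> bool" where
  "admissible_inputs S \<longleftrightarrow>
     (\<forall>\<sigma>\<in>S. \<forall>\<tau>\<ge>0. tshift \<tau> \<sigma> \<in> S) \<and>
     (\<forall>\<sigma>1\<in>S. \<forall>\<sigma>2\<in>S. \<forall>\<tau>>0. concat_at \<tau> \<sigma>1 \<sigma>2 \<in> S)"

definition forward_complete_system ::
  "(real \<Rightarrow> 'q) set \<Rightarrow> (real \<Rightarrow> 'x::banach \<Rightarrow> (real \<Rightarrow> 'q) \<Rightarrow> 'x) \<Rightarrow> bool" where
  "forward_complete_system S \<phi> \<longleftrightarrow>
     admissible_inputs S \<and>
     (\<forall>x. \<forall>\<sigma>\<in>S. \<phi> 0 x \<sigma> = x) \<and>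
     (\<forall>t\<ge>0. \<forall>x. \<forall>\<sigma>\<in>S. \<forall>\<sigma>'\<in>S. (\<forall>s\<in>{0..t}. \<sigma>' s = \<sigma> s) \<longrightarrow> \<phi> t x \<sigma>' = \<phi> t x \<sigma>) \<and>
     (\<forall>x. \<forall>\<sigma>\<in>S. continuous_on {0..} (\<lambda>t. \<phi> t x \<sigma>)) \<and>
     (\<forall>t\<ge>0. \<forall>\<tau>\<ge>0. \<forall>x. \<forall>\<sigma>\<in>S. \<phi> \<tau> (\<phi> t x \<sigma>) (tshift t \<sigma>) = \<phi> (t + \<tau>) x \<sigma>)"

definition UGES ::
  "(real \<Rightarrow> 'q) set \<Rightarrow> (real \<Rightarrow> 'x::real_normed_vector \<Rightarrow> (real \<Rightarrow> 'q) \<Rightarrow> 'x) \<Rightarrow> bool" where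
  "UGES S \<phi> \<longleftrightarrow> (\<exists>M>0. \<exists>lam>0. \<forall>t\<ge>0. \<forall>x. \<forall>\<sigma>\<in>S.
      norm (\<phi> t x \<sigma>) \<le> M * exp (- lam * t) * norm x)"

definition dini_upper ::
  "(real \<Rightarrow> 'x \<Rightarrow> (real \<Rightarrow> 'q) \<Rightarrow> 'x) \<Rightarrow> ('x \<Rightarrow> real) \<Rightarrow> (real \<Rightarrow> 'q) \<Rightarrow> 'x \<Rightarrow> ereal" where
  "dini_upper \<phi> V \<sigma> x = Limsup (at_right 0) (\<lambda>h. ereal ((V (\<phi> h x \<sigma>) - V x) / h))"

definition S_uniformly_continuous ::
  "(real \<Rightarrow> 'q) set \<Rightarrow> (real \<Rightarrow> 'x::real_normed_vector \<Rightarrow> (real \<Rightarrow> 'q) \<Rightarrow> 'x) \<Rightarrow> bool" where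
  "S_uniformly_continuous S \<phi> \<longleftrightarrow>
     (\<forall>tb>0. \<forall>x. \<forall>\<epsilon>>0. \<exists>\<eta>>0. \<forall>t\<in>{0..tb}. \<forall>y\<in>cball x \<eta>. \<forall>\<sigma>\<in>S.
        norm (\<phi> t x \<sigma> - \<phi> t y \<sigma>) \<le> \<epsilon>)"

end

theory Submission
  imports Defs
begin

lemma compare_lemma:
  fixes y w :: "real \<Rightarrow> real"
  assumes ab: "a \<le> b"
    and lc: "\<And>s. a < s \<Longrightarrow> s \<le> b \<Longrightarrow> (y \<longlongrightarrow> y s) (at_left s)"
    and wc: "\<And>s. isCont w s"
    and step: "\<And>s. a \<le> s \<Longrightarrow> s < b \<Longrightarrow> y s \<le> w s \<Longrightarrow>
                 \<exists>d>0. \<forall>h. 0 < h \<and> h < d \<longrightarrow> y (s + h) \<le> w (s + h)"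
    and start: "y a \<le> w a"
  shows "y b \<le> w b"
proof -
  define A where "A = {t. a \<le> t \<and> t \<le> b \<and> (\<forall>r. a \<le> r \<and> r \<le> t \<longrightarrow> y r \<le> w r)}"
  have aA: "a \<in> A" using ab start by (auto simp: A_def)
  have bdd: "bdd_above A" unfolding A_def by (rule bdd_aboveI[of _ b]) auto
  define s where "s = Sup A"
  have as: "a \<le> s" unfolding s_def using aA bdd by (rule cSup_upper)
  have sb: "s \<le> b" unfolding s_def using aA by (intro cSup_least) (auto simp: A_def)
  have below: "y r \<le> w r" if "a \<le> r" "r < s" for r
  proof -
    have "r < Sup A" using that(2) unfolding s_def .
    then obtain t where "t \<in> A" "r < t" using less_cSupE[of r A] aA by blast
    then show ?thesis using that by (auto simp: A_def)
  qed
  have ys: "y s \<le> w s"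
  proof (cases "s = a")
    case True then show ?thesis using start by simp
  next
    case False
    then have as': "a < s" using as by simp
    have "(y \<longlongrightarrow> y s) (at_left s)" using lc as' sb by simp
    moreover have "(w \<longlongrightarrow> w s) (at_left s)"
      using wc[of s] by (simp add: isCont_def filterlim_at_split)
    moreover have "eventually (\<lambda>r. y r \<le> w r) (at_left s)"
      unfolding eventually_at_left_field using as' below by (intro exI[of _ a]) auto
    ultimately show ?thesis
      by (intro tendsto_le[OF trivial_limit_at_left_real]) auto
  qed
  have sA: "s \<in> A" using as sb below ys by (auto simp: A_def le_less)
  have "s = b"
  proof (rule ccontr)
    assume "s \<noteq> b"
    then have sb': "s < b" using sb by simp
    obtain d where d: "d > 0" "\<forall>h. 0 < h \<and> h < d \<longrightarrow> y (s + h) \<le> w (s + h)"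
      using step[OF as sb' ys] by blast
    define s' where "s' = s + min d (b - s) / 2"
    have "s' \<in> A"
      unfolding A_def
    proof (safe)
      show "a \<le> s'" "s' \<le> b" using as sb' d(1) by (auto simp: s'_def min_def field_simps)
      fix r assume r: "a \<le> r" "r \<le> s'"
      show "y r \<le> w r"
      proof (cases "r \<le> s")
        case True then show ?thesis using below r ys by (auto simp: le_less)
      next
        case False
        have "r - s < d" using r(2) d(1) sb' by (auto simp: s'_def min_def field_simps split: if_splits)
        then have "y (s + (r - s)) \<le> w (s + (r - s))"
          using d(2) False by (metis diff_gt_0_iff_gt not_le)
        then show ?thesis by simp
      qed
    qed
    then have "s' \<le> s" unfolding s_def using bdd by (rule cSup_upper)
    then show False using d(1) sb' by (auto simp: s'_def min_def split: if_splits)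
  qed
  then show ?thesis using ys by simp
qed

lemma step_lemma:
  fixes y w :: "real \<Rightarrow> real"
  assumes wd: "(w has_real_derivative w') (at s)"
    and le: "y s \<le> w s"
    and D: "Limsup (at_right 0) (\<lambda>h. ereal ((y (s + h) - y s) / h)) < ereal w'
            \<or> (y s < w s \<and> Limsup (at_right 0) (\<lambda>h. ereal ((y (s + h) - y s) / h)) < \<infinity>)"
  shows "\<exists>d>0. \<forall>h. 0 < h \<and> h < d \<longrightarrow> y (s + h) \<le> w (s + h)"
proof -
  let ?D = "Limsup (at_right 0) (\<lambda>h. ereal ((y (s + h) - y s) / h))"
  have ev: "eventually (\<lambda>h. y (s + h) \<le> w (s + h)) (at_right (0::real))"
    using D
  proof
    assume a: "?D < ereal w'"
    obtain L where L: "?D < ereal L" "L < w'" using ereal_dense2[OF a] by auto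
    have e1: "eventually (\<lambda>h. ereal ((y (s + h) - y s) / h) < ereal L) (at_right 0)"
      using Limsup_lessD[OF L(1)] .
    have "((\<lambda>h. (w (s + h) - w s) / h) \<longlongrightarrow> w') (at 0)" using wd by (simp add: DERIV_def)
    then have "((\<lambda>h. (w (s + h) - w s) / h) \<longlongrightarrow> w') (at_right 0)"
      by (simp add: filterlim_at_split)
    then have e2: "eventually (\<lambda>h. L < (w (s + h) - w s) / h) (at_right 0)"
      using L(2) by (rule order_tendstoD(1))
    have e3: "eventually (\<lambda>h::real. 0 < h) (at_right 0)" by (simp add: eventually_at_right_less)
    show ?thesis using e1 e2 e3
    proof eventually_elim
      case (elim h)
      then have "y (s + h) - y s < L * h" "L * h < w (s + h) - w s"
        by (auto simp: field_simps)
      then show ?case using le by linarith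
    qed
  next
    assume a: "y s < w s \<and> ?D < \<infinity>"
    obtain L where L: "?D < ereal L" using ereal_dense2[of ?D \<infinity>] a by auto
    have e1: "eventually (\<lambda>h. ereal ((y (s + h) - y s) / h) < ereal L) (at_right 0)"
      using Limsup_lessD[OF L] .
    have "isCont w s" using wd by (rule DERIV_isCont)
    then have "((\<lambda>h. w (s + h) - L * h) \<longlongrightarrow> w s - L * 0) (at 0)"
      by (intro tendsto_intros) (simp add: isCont_iff)
    then have "((\<lambda>h. w (s + h) - L * h) \<longlongrightarrow> w s) (at_right 0)"
      by (simp add: filterlim_at_split)
    then have e2: "eventually (\<lambda>h. y s < w (s + h) - L * h) (at_right 0)"
      using a by (intro order_tendstoD(1)) auto
    have e3: "eventually (\<lambda>h::real. 0 < h) (at_right 0)" by (simp add: eventually_at_right_less)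
    show ?thesis using e1 e2 e3
    proof eventually_elim
      case (elim h)
      then have "y (s + h) - y s < L * h"
        by (auto simp: field_simps)
      then show ?case using elim by linarith
    qed
  qed
  then show ?thesis unfolding eventually_at_right_field by auto
qed


lemma sys_facts:
  assumes "forward_complete_system S \<phi>"
  shows "\<And>\<sigma> \<tau>. \<sigma> \<in> S \<Longrightarrow> \<tau> \<ge> 0 \<Longrightarrow> tshift \<tau> \<sigma> \<in> S"
    and "\<And>\<sigma>1 \<sigma>2 \<tau>. \<sigma>1 \<in> S \<Longrightarrow> \<sigma>2 \<in> S \<Longrightarrow> \<tau> > 0 \<Longrightarrow> concat_at \<tau> \<sigma>1 \<sigma>2 \<in> S"
    and "\<And>x \<sigma>. \<sigma> \<in> S \<Longrightarrow> \<phi> 0 x \<sigma> = x"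
    and "\<And>t x \<sigma> \<sigma>'. t \<ge> 0 \<Longrightarrow> \<sigma> \<in> S \<Longrightarrow> \<sigma>' \<in> S \<Longrightarrow> (\<forall>s\<in>{0..t}. \<sigma>' s = \<sigma> s) \<Longrightarrow> \<phi> t x \<sigma>' = \<phi> t x \<sigma>"
    and "\<And>x \<sigma>. \<sigma> \<in> S \<Longrightarrow> continuous_on {0..} (\<lambda>t. \<phi> t x \<sigma>)"
    and "\<And>t \<tau> x \<sigma>. t \<ge> 0 \<Longrightarrow> \<tau> \<ge> 0 \<Longrightarrow> \<sigma> \<in> S \<Longrightarrow> \<phi> \<tau> (\<phi> t x \<sigma>) (tshift t \<sigma>) = \<phi> (t + \<tau>) x \<sigma>"
  using assms unfolding forward_complete_system_def admissible_inputs_def by blast+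

lemma concat_flow:
  fixes \<phi> :: "real \<Rightarrow> 'x::banach \<Rightarrow> (real \<Rightarrow> 'q) \<Rightarrow> 'x"
  assumes sys: "forward_complete_system S \<phi>"
    and uc: "S_uniformly_continuous S \<phi>"
    and h: "h > 0" and t: "t \<ge> 0" and \<sigma>: "\<sigma> \<in> S" and \<sigma>': "\<sigma>' \<in> S"
  shows "\<phi> t (\<phi> h x \<sigma>) \<sigma>' = \<phi> (t + h) x (concat_at h \<sigma> \<sigma>')"
proof -
  note F = sys_facts[OF sys]
  define w where "w = concat_at h \<sigma> \<sigma>'"
  have wS: "w \<in> S" using F(2)[OF \<sigma> \<sigma>' h] by (simp add: w_def)
  have hw: "\<phi> h x w = \<phi> h x \<sigma>"
    using F(4)[of h \<sigma> w x] h \<sigma> wS by (auto simp: w_def concat_at_def)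
  define z where "z = \<phi> h x \<sigma>"
  show ?thesis
  proof (cases "t = 0")
    case True
    then show ?thesis using F(3)[OF \<sigma>'] hw by (simp add: w_def)
  next
    case False
    then have t0: "t > 0" using t by simp
    have "norm (\<phi> t z \<sigma>' - \<phi> (t + h) x w) \<le> 2 * \<epsilon>" if e: "\<epsilon> > 0" for \<epsilon>
    proof -
      obtain \<eta> where \<eta>: "\<eta> > 0" "\<forall>s\<in>{0..t}. \<forall>y\<in>cball z \<eta>. \<forall>\<sigma>\<in>S. norm (\<phi> s z \<sigma> - \<phi> s y \<sigma>) \<le> \<epsilon>"
        using uc t0 e unfolding S_uniformly_continuous_def by blast
      obtain d1 where d1: "d1 > 0" "\<forall>r\<in>{0..}. dist r h < d1 \<longrightarrow> dist (\<phi> r x w) (\<phi> h x w) < \<eta>"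
        using F(5)[OF wS, of x] h \<eta>(1) unfolding continuous_on_iff by (meson atLeast_iff less_imp_le)
      obtain d2 where d2: "d2 > 0" "\<forall>r\<in>{0..}. dist r 0 < d2 \<longrightarrow> dist (\<phi> r z \<sigma>') (\<phi> 0 z \<sigma>') < \<eta>"
        using F(5)[OF \<sigma>', of z] \<eta>(1) unfolding continuous_on_iff by (meson atLeast_iff order_refl)
      define \<delta> where "\<delta> = min (min d1 d2) t / 2"
      have \<delta>: "\<delta> > 0" "\<delta> < d1" "\<delta> < d2" "\<delta> < t" using d1 d2 t0 by (auto simp: \<delta>_def min_def)
      define y1 where "y1 = \<phi> (h + \<delta>) x w"
      define y2 where "y2 = \<phi> \<delta> z \<sigma>'"
      have y1: "y1 \<in> cball z \<eta>"
        using d1(2)[rule_format, of "h + \<delta>"] \<delta> h hw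
        by (auto simp: y1_def z_def dist_commute dist_real_def)
      have y2: "y2 \<in> cball z \<eta>"
        using d2(2)[rule_format, of "\<delta>"] \<delta> F(3)[OF \<sigma>']
        by (auto simp: y2_def dist_commute dist_real_def)
      define \<sigma>'' where "\<sigma>'' = tshift \<delta> \<sigma>'"
      have s''S: "\<sigma>'' \<in> S" using F(1)[OF \<sigma>'] \<delta> by (simp add: \<sigma>''_def)
      have tws: "tshift (h + \<delta>) w \<in> S" using F(1)[OF wS] \<delta> h by simp
      have e1: "\<phi> (t + h) x w = \<phi> (t - \<delta>) y1 (tshift (h + \<delta>) w)"
        using F(6)[of "h + \<delta>" "t - \<delta>" w x] \<delta> h wS
        by (simp add: y1_def) (simp add: algebra_simps)
      also have "\<dots> = \<phi> (t - \<delta>) y1 \<sigma>''"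
        using F(4)[of "t - \<delta>" \<sigma>'' "tshift (h + \<delta>) w" y1] \<delta> s''S tws h
        by (auto simp: \<sigma>''_def tshift_def w_def concat_at_def)
      finally have e1: "\<phi> (t + h) x w = \<phi> (t - \<delta>) y1 \<sigma>''" .
      have e2: "\<phi> t z \<sigma>' = \<phi> (t - \<delta>) y2 \<sigma>''"
        using F(6)[of \<delta> "t - \<delta>" \<sigma>' z] \<delta> \<sigma>' by (simp add: y2_def \<sigma>''_def)
      let ?c = "\<phi> (t - \<delta>) z \<sigma>''"
      have n1: "norm (?c - \<phi> (t - \<delta>) y1 \<sigma>'') \<le> \<epsilon>" using \<eta>(2) y1 s''S \<delta> by auto
      have n2: "norm (?c - \<phi> (t - \<delta>) y2 \<sigma>'') \<le> \<epsilon>" using \<eta>(2) y2 s''S \<delta> by auto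
      have "\<phi> (t - \<delta>) y2 \<sigma>'' - \<phi> (t - \<delta>) y1 \<sigma>'' = (?c - \<phi> (t - \<delta>) y1 \<sigma>'') - (?c - \<phi> (t - \<delta>) y2 \<sigma>'')"
        by simp
      then have "norm (\<phi> (t - \<delta>) y2 \<sigma>'' - \<phi> (t - \<delta>) y1 \<sigma>'') \<le> norm (?c - \<phi> (t - \<delta>) y1 \<sigma>'') + norm (?c - \<phi> (t - \<delta>) y2 \<sigma>'')"
        by (metis norm_triangle_ineq4)
      then show ?thesis using n1 n2 e1 e2 by simp
    qed
    then have "norm (\<phi> t z \<sigma>' - \<phi> (t + h) x w) \<le> 0 + e" if "e > 0" for e
      using that by (metis add_0 field_sum_of_halves half_gt_zero mult_2)
    then have "norm (\<phi> t z \<sigma>' - \<phi> (t + h) x w) \<le> 0"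
      by (rule field_le_epsilon)
    then have "norm (\<phi> t z \<sigma>' - \<phi> (t + h) x w) = 0"
      by (simp only: norm_le_zero_iff norm_zero)
    then show ?thesis by (simp add: z_def w_def)
  qed
qed


lemma powr_le_cancel_base:
  fixes a B p :: real
  assumes "p > 0" "a \<ge> 0" "B \<ge> 0" "a powr p \<le> B powr p"
  shows "a \<le> B"
proof (rule ccontr)
  assume "\<not> a \<le> B"
  then have "B powr p < a powr p" using powr_less_mono2[of p B a] assms by simp
  then show False using assms by simp
qed

lemma dini_along:
  fixes \<phi> :: "real \<Rightarrow> 'x::banach \<Rightarrow> (real \<Rightarrow> 'q) \<Rightarrow> 'x"
  assumes sys: "forward_complete_system S \<phi>" and \<sigma>: "\<sigma> \<in> S" and s: "s \<ge> 0"
  shows "Limsup (at_right 0) (\<lambda>h. ereal ((V (\<phi> (s + h) x \<sigma>) - V (\<phi> s x \<sigma>)) / h))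
         = dini_upper \<phi> V (tshift s \<sigma>) (\<phi> s x \<sigma>)"
  unfolding dini_upper_def
proof (rule Limsup_eq)
  show "\<forall>\<^sub>F h in at_right 0. ereal ((V (\<phi> (s + h) x \<sigma>) - V (\<phi> s x \<sigma>)) / h) =
          ereal ((V (\<phi> h (\<phi> s x \<sigma>) (tshift s \<sigma>)) - V (\<phi> s x \<sigma>)) / h)"
    unfolding eventually_at_right_field
    using sys_facts(6)[OF sys _ _ \<sigma>] s by (intro exI[of _ 1]) auto
qed

lemma iii_implies_i:
  fixes \<phi> :: "real \<Rightarrow> 'x::banach \<Rightarrow> (real \<Rightarrow> 'q) \<Rightarrow> 'x"
  assumes sys: "forward_complete_system S \<phi>"
    and t1: "t1 > 0" and G0: "G0 > 0"
    and bnd: "\<forall>t\<in>{0..t1}. \<forall>x. \<forall>\<sigma>\<in>S. norm (\<phi> t x \<sigma>) \<le> G0 * norm x"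
    and p: "p > 0" and c: "c > 0"
    and Vnn: "\<forall>x. V x \<ge> 0"
    and lc: "\<forall>x. \<forall>\<sigma>\<in>S. \<forall>t>0. ((\<lambda>s. V (\<phi> s x \<sigma>)) \<longlongrightarrow> V (\<phi> t x \<sigma>)) (at_left t)"
    and dini: "\<forall>x. \<forall>\<sigma>\<in>S. dini_upper \<phi> V \<sigma> x \<le> ereal (- (norm x powr p))"
    and Vub: "\<forall>x. V x \<le> c * norm x powr p"
  shows "UGES S \<phi>"
proof -
  note F = sys_facts[OF sys]
  define \<alpha> where "\<alpha> = 1 / (2 * c)"
  have \<alpha>: "\<alpha> > 0" "\<alpha> < 1 / c" using c by (auto simp: \<alpha>_def field_simps)
  define lam where "lam = \<alpha> / p"
  define K0 where "K0 = G0 powr p * c * exp (\<alpha> * t1) / t1"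
  define M where "M = max (G0 * exp (lam * t1)) (K0 powr (1 / p))"
  have K0: "K0 > 0" using G0 c t1 by (auto simp: K0_def)
  have lam: "lam > 0" using \<alpha> p by (simp add: lam_def)
  have M: "M > 0" using G0 by (simp add: M_def less_max_iff_disj)
  have main: "norm (\<phi> t x \<sigma>) \<le> M * exp (- lam * t) * norm x"
    if t: "t \<ge> 0" and \<sigma>: "\<sigma> \<in> S" for t x \<sigma>
  proof -
    define y where "y = (\<lambda>s. V (\<phi> s x \<sigma>))"
    define n where "n = (\<lambda>s. norm (\<phi> s x \<sigma>))"
    have y0: "y 0 \<le> c * norm x powr p" using Vub F(3)[OF \<sigma>] by (simp add: y_def)
    have ynn: "y s \<ge> 0" for s using Vnn by (simp add: y_def)
    have yub: "y s \<le> c * n s powr p" for s using Vub by (simp add: y_def n_def)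
    have D: "Limsup (at_right 0) (\<lambda>h. ereal ((y (s + h) - y s) / h)) \<le> ereal (- (n s powr p))"
      if "s \<ge> 0" for s
      using dini_along[OF sys \<sigma> that, of V x] dini F(1)[OF \<sigma> that] by (simp add: y_def n_def)
    have ylc: "(y \<longlongrightarrow> y s) (at_left s)" if "s > 0" for s
      using lc \<sigma> that by (simp add: y_def)
    have expdec: "y r \<le> y 0 * exp (- \<alpha> * r)" if r: "r \<ge> 0" for r
    proof -
      have "y r \<le> y 0 * exp (- \<alpha> * r) + e" if e: "e > 0" for e
      proof -
        define w where "w = (\<lambda>r. (y 0 + e) * exp (- \<alpha> * r))"
        have wd: "(w has_real_derivative (- \<alpha> * w s)) (at s)" for s
          unfolding w_def by (auto intro!: derivative_eq_intros)
        have wpos: "w s > 0" for s using ynn[of 0] e by (simp add: w_def)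
        have "y r \<le> w r"
        proof (rule compare_lemma[OF r])
          show "\<And>s. 0 < s \<Longrightarrow> s \<le> r \<Longrightarrow> (y \<longlongrightarrow> y s) (at_left s)" using ylc by simp
          show "\<And>s. isCont w s" using wd by (rule DERIV_isCont)
          show "y 0 \<le> w 0" using e by (simp add: w_def)
          fix s assume s: "0 \<le> s" "s < r" "y s \<le> w s"
          have Ds: "Limsup (at_right 0) (\<lambda>h. ereal ((y (s + h) - y s) / h)) \<le> ereal (- (y s / c))"
          proof -
            have "- (n s powr p) \<le> - (y s / c)" using yub[of s] c by (simp add: field_simps)
            then show ?thesis using D[OF s(1)] order_trans by fastforce
          qed
          show "\<exists>d>0. \<forall>h. 0 < h \<and> h < d \<longrightarrow> y (s + h) \<le> w (s + h)"
          proof (rule step_lemma[where y=y and w=w and s=s, OF wd[of s] s(3)])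
            show "Limsup (at_right 0) (\<lambda>h. ereal ((y (s + h) - y s) / h)) < ereal (- \<alpha> * w s) \<or>
                  y s < w s \<and> Limsup (at_right 0) (\<lambda>h. ereal ((y (s + h) - y s) / h)) < \<infinity>"
            proof (cases "y s < w s")
              case True then show ?thesis using Ds by (auto intro: le_less_trans)
            next
              case False
              then have "y s = w s" using s(3) by simp
              moreover have "- (w s / c) < - \<alpha> * w s"
                using \<alpha>(2) wpos[of s] c by (simp add: field_simps)
              ultimately show ?thesis using Ds by (auto intro: le_less_trans)
            qed
          qed
        qed
        also have "w r \<le> y 0 * exp (- \<alpha> * r) + e"
        proof -
          have "e * exp (- \<alpha> * r) \<le> e * 1" using e \<alpha> r by (intro mult_left_mono) auto
          then show ?thesis by (simp add: w_def algebra_simps)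
        qed
        finally show ?thesis .
      qed
      then show ?thesis by (rule field_le_epsilon)
    qed
    show ?thesis
    proof (cases "t \<le> t1")
      case True
      have "n t \<le> G0 * norm x" using bnd True t \<sigma> by (simp add: n_def)
      also have "\<dots> \<le> M * exp (- lam * t) * norm x"
      proof -
        have "G0 \<le> M * exp (- lam * t)"
        proof -
          have "G0 = G0 * exp (lam * t1) * exp (- lam * t1)" by (simp add: exp_minus field_simps)
          also have "\<dots> \<le> M * exp (- lam * t)"
            using True lam G0 M by (intro mult_mono) (auto simp: M_def)
          finally show ?thesis .
        qed
        then show ?thesis by (intro mult_right_mono) auto
      qed
      finally show ?thesis by (simp add: n_def)
    next
      case False
      define t0 where "t0 = t - t1"
      have t0: "t0 \<ge> 0" using False by (simp add: t0_def)
      define K where "K = n t powr p / G0 powr p"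
      have Kle: "K \<le> n s powr p" if "t0 \<le> s" "s \<le> t" for s
      proof -
        have "\<phi> (t - s) (\<phi> s x \<sigma>) (tshift s \<sigma>) = \<phi> t x \<sigma>"
          using F(6)[of s "t - s" \<sigma> x] that t0 \<sigma> by simp
        moreover have "norm (\<phi> (t - s) (\<phi> s x \<sigma>) (tshift s \<sigma>)) \<le> G0 * n s"
          using bnd F(1)[OF \<sigma>, of s] that t0 by (auto simp: n_def t0_def)
        ultimately have "n t \<le> G0 * n s" by (simp add: n_def)
        then have "n t powr p \<le> (G0 * n s) powr p" using p by (intro powr_mono2) (auto simp: n_def)
        also have "\<dots> = G0 powr p * n s powr p" using G0 by (simp add: powr_mult n_def)
        finally show ?thesis using G0 by (simp add: K_def field_simps)
      qed
      have lin: "y t \<le> y t0 - K * t1 + e" if e: "e > 0" for e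
      proof -
        define \<epsilon> where "\<epsilon> = e / (1 + t1)"
        have \<epsilon>: "\<epsilon> > 0" using e t1 by (simp add: \<epsilon>_def)
        define w where "w = (\<lambda>r. y t0 + \<epsilon> - (K - \<epsilon>) * (r - t0))"
        have wd: "(w has_real_derivative (- (K - \<epsilon>))) (at s)" for s
          unfolding w_def by (auto intro!: derivative_eq_intros)
        have "y t \<le> w t"
        proof (rule compare_lemma[where y=y and w=w and a=t0 and b=t])
          show "t0 \<le> t" using t1 by (simp add: t0_def)
          show "\<And>s. t0 < s \<Longrightarrow> s \<le> t \<Longrightarrow> (y \<longlongrightarrow> y s) (at_left s)" using ylc t0 by simp
          show "\<And>s. isCont w s" using wd by (rule DERIV_isCont)
          show "y t0 \<le> w t0" using \<epsilon> by (simp add: w_def)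
          fix s assume s: "t0 \<le> s" "s < t" "y s \<le> w s"
          show "\<exists>d>0. \<forall>h. 0 < h \<and> h < d \<longrightarrow> y (s + h) \<le> w (s + h)"
          proof (rule step_lemma[where y=y and w=w and s=s, OF wd[of s] s(3)])
            have "Limsup (at_right 0) (\<lambda>h. ereal ((y (s + h) - y s) / h)) \<le> ereal (- K)"
              using D[of s] s t0 Kle[of s] order_trans by fastforce
            also have "\<dots> < ereal (- (K - \<epsilon>))" using \<epsilon> by simp
            finally show "Limsup (at_right 0) (\<lambda>h. ereal ((y (s + h) - y s) / h)) < ereal (- (K - \<epsilon>)) \<or>
                  y s < w s \<and> Limsup (at_right 0) (\<lambda>h. ereal ((y (s + h) - y s) / h)) < \<infinity>" by simp
          qed
        qed
        also have "w t = y t0 - K * t1 + \<epsilon> * (1 + t1)" by (simp add: w_def t0_def algebra_simps)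
        also have "\<epsilon> * (1 + t1) = e" using t1 by (simp add: \<epsilon>_def)
        finally show ?thesis .
      qed
      have "y t \<le> y t0 - K * t1" using lin by (rule field_le_epsilon)
      then have "K * t1 \<le> y t0" using ynn[of t] by simp
      also have "\<dots> \<le> c * norm x powr p * exp (- \<alpha> * t0)"
        using expdec[OF t0] y0 by (smt (verit) exp_gt_zero mult_right_mono)
      finally have "n t powr p \<le> K0 * exp (- \<alpha> * t) * norm x powr p"
        using t1 G0 by (simp add: K_def K0_def t0_def field_simps exp_diff exp_minus)
      also have "\<dots> = (K0 powr (1 / p) * exp (- lam * t) * norm x) powr p"
        using K0 p by (simp add: powr_mult powr_powr exp_powr_real lam_def)
      finally have le: "n t powr p \<le> (K0 powr (1 / p) * exp (- lam * t) * norm x) powr p" .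
      have "n t \<le> K0 powr (1 / p) * exp (- lam * t) * norm x"
        using powr_le_cancel_base[OF p _ _ le] by (simp add: n_def)
      also have "\<dots> \<le> M * exp (- lam * t) * norm x"
        by (intro mult_right_mono) (auto simp: M_def)
      finally show ?thesis by (simp add: n_def)
    qed
  qed
  show ?thesis unfolding UGES_def using M lam main by blast
qed


lemma Sup_compare:
  fixes A B :: "real set"
  assumes "A \<noteq> {}" "B \<noteq> {}" "bdd_above B" "\<forall>a\<in>A. \<exists>b\<in>B. a \<le> b + e"
  shows "Sup A \<le> Sup B + e"
proof (rule cSup_least[OF assms(1)])
  fix a assume "a \<in> A"
  then obtain b where "b \<in> B" "a \<le> b + e" using assms(4) by blast
  moreover have "b \<le> Sup B" using cSup_upper[OF \<open>b \<in> B\<close> assms(3)] .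
  ultimately show "a \<le> Sup B + e" by simp
qed

lemma i_implies_ii:
  fixes \<phi> :: "real \<Rightarrow> 'x::banach \<Rightarrow> (real \<Rightarrow> 'q) \<Rightarrow> 'x"
  assumes sys: "forward_complete_system S \<phi>"
    and uc: "S_uniformly_continuous S \<phi>"
    and ug: "UGES S \<phi>"
  shows "\<exists>V :: 'x \<Rightarrow> real. \<exists>p>0. \<exists>cl>0. \<exists>cu>0.
              continuous_on UNIV V \<and> (\<forall>x. V x \<ge> 0) \<and>
              (\<forall>x. cl * norm x powr p \<le> V x \<and> V x \<le> cu * norm x powr p) \<and>
              (\<forall>x. \<forall>\<sigma>\<in>S. dini_upper \<phi> V \<sigma> x \<le> ereal (- (norm x powr p)))"
proof -
  note F = sys_facts[OF sys]
  obtain M lam where M: "M > 0" and lam: "lam > 0"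
    and dec: "\<And>t x \<sigma>. t \<ge> 0 \<Longrightarrow> \<sigma> \<in> S \<Longrightarrow> norm (\<phi> t x \<sigma>) \<le> M * exp (- lam * t) * norm x"
    using ug unfolding UGES_def by blast
  define \<mu> where "\<mu> = lam / 2"
  have \<mu>: "\<mu> > 0" using lam by (simp add: \<mu>_def)
  define M' where "M' = max M 1"
  have M': "M' \<ge> 1" "M' \<ge> M" by (auto simp: M'_def)
  define A where "A = (\<lambda>x. insert (norm x) ((\<lambda>(t, \<sigma>). exp (\<mu> * t) * norm (\<phi> t x \<sigma>)) ` ({0..} \<times> S)))"
  define W where "W = (\<lambda>x. Sup (A x))"
  have tail: "exp (\<mu> * t) * norm (\<phi> t x \<sigma>) \<le> M * exp (- \<mu> * t) * norm x"
    if "t \<ge> 0" "\<sigma> \<in> S" for t x \<sigma>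
  proof -
    have "exp (\<mu> * t) * norm (\<phi> t x \<sigma>) \<le> exp (\<mu> * t) * (M * exp (- lam * t) * norm x)"
      using dec[OF that] by (intro mult_left_mono) auto
    also have "\<dots> = M * (exp (\<mu> * t) * exp (- lam * t)) * norm x" by simp
    also have "exp (\<mu> * t) * exp (- lam * t) = exp (- \<mu> * t)"
      by (simp add: \<mu>_def flip: exp_add)
    finally show ?thesis by simp
  qed
  have Abnd: "a \<le> M' * norm x" if "a \<in> A x" for a x
  proof -
    from that consider "a = norm x" | t \<sigma> where "t \<ge> 0" "\<sigma> \<in> S" "a = exp (\<mu> * t) * norm (\<phi> t x \<sigma>)"
      unfolding A_def by auto
    then show ?thesis
    proof cases
      case 1 then show ?thesis using M' by (simp add: mult_le_cancel_right1)
    next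
      case (2 t \<sigma>)
      then have "a \<le> M * exp (- \<mu> * t) * norm x" using tail by simp
      also have "\<dots> \<le> M' * 1 * norm x"
        using M' M \<mu> 2 by (intro mult_right_mono mult_mono) auto
      finally show ?thesis by simp
    qed
  qed
  have Ane: "A x \<noteq> {}" for x by (simp add: A_def)
  have Abdd: "bdd_above (A x)" for x using Abnd by (intro bdd_aboveI) blast
  have Anorm: "norm x \<in> A x" for x by (simp add: A_def)
  have Aelt: "exp (\<mu> * t) * norm (\<phi> t x \<sigma>) \<in> A x" if "t \<ge> 0" "\<sigma> \<in> S" for t x \<sigma>
    using that unfolding A_def by (intro insertI2 image_eqI[of _ _ "(t, \<sigma>)"]) auto
  have Anonneg: "a \<ge> 0" if "a \<in> A x" for a x using that by (auto simp: A_def)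
  have Wge: "norm x \<le> W x" for x unfolding W_def by (rule cSup_upper[OF Anorm Abdd])
  have Wle: "W x \<le> M' * norm x" for x unfolding W_def by (rule cSup_least[OF Ane]) (rule Abnd)
  have Wdec: "W (\<phi> h x \<sigma>) \<le> exp (- \<mu> * h) * W x" if h: "h > 0" and \<sigma>: "\<sigma> \<in> S" for h x \<sigma>
  proof -
    let ?z = "\<phi> h x \<sigma>"
    have up: "a \<le> W x" if "a \<in> A x" for a unfolding W_def by (rule cSup_upper[OF that Abdd])
    have "a \<le> exp (- \<mu> * h) * W x" if a: "a \<in> A ?z" for a
    proof -
      from a consider "a = norm ?z" | t \<sigma>' where "t \<ge> 0" "\<sigma>' \<in> S" "a = exp (\<mu> * t) * norm (\<phi> t ?z \<sigma>')"
        unfolding A_def by auto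
      then show ?thesis
      proof cases
        case 1
        have "a = exp (- \<mu> * h) * (exp (\<mu> * h) * norm (\<phi> h x \<sigma>))"
          using 1 by (simp add: mult.assoc[symmetric] flip: exp_add)
        also have "\<dots> \<le> exp (- \<mu> * h) * W x"
          using up[OF Aelt[of h \<sigma> x]] h \<sigma> by (intro mult_left_mono) auto
        finally show ?thesis .
      next
        case (2 t \<sigma>')
        define w where "w = concat_at h \<sigma> \<sigma>'"
        have wS: "w \<in> S" using F(2)[OF \<sigma> 2(2) h] by (simp add: w_def)
        have "a = exp (- \<mu> * h) * (exp (\<mu> * (t + h)) * norm (\<phi> (t + h) x w))"
          using 2 concat_flow[OF sys uc h 2(1) \<sigma> 2(2), of x]
          by (simp add: w_def mult.assoc[symmetric] flip: exp_add) (simp add: algebra_simps)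
        also have "\<dots> \<le> exp (- \<mu> * h) * W x"
          using up[OF Aelt[of "t + h" w x]] h 2(1) wS by (intro mult_left_mono) auto
        finally show ?thesis .
      qed
    qed
    then show ?thesis unfolding W_def by (intro cSup_least[OF Ane]) auto
  qed
  have Wcont: "continuous_on UNIV W"
    unfolding continuous_on_iff
  proof (intro ballI allI impI)
    fix x :: 'x and e :: real assume e: "e > 0"
    define \<epsilon> where "\<epsilon> = e / 2"
    have \<epsilon>: "\<epsilon> > 0" using e by (simp add: \<epsilon>_def)
    define K where "K = 2 * M * (norm x + 1) / \<epsilon>"
    have nx1: "norm x + 1 > 0" by (simp add: add_nonneg_pos)
    have K: "K > 0" using M \<epsilon> nx1 unfolding K_def by (intro divide_pos_pos mult_pos_pos) auto
    define T where "T = max 1 (ln K / \<mu>)"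
    have T1: "T \<ge> 1" by (simp add: T_def)
    have "\<mu> * (ln K / \<mu>) \<le> \<mu> * T" using \<mu> by (intro mult_left_mono) (auto simp: T_def)
    then have T: "T \<ge> 1" "\<mu> * T \<ge> ln K" using \<mu> T1 by auto
    have "exp (ln K) \<le> exp (\<mu> * T)" using T(2) by simp
    then have "K \<le> exp (\<mu> * T)" using K by simp
    then have tailT: "M * exp (- \<mu> * t) * (norm x + 1) \<le> \<epsilon> / 2" if "t \<ge> T" for t
    proof -
      have "exp (\<mu> * T) \<le> exp (\<mu> * t)" using that \<mu> by simp
      with \<open>K \<le> exp (\<mu> * T)\<close> have Kt: "K \<le> exp (\<mu> * t)" by linarith
      have "M * exp (- \<mu> * t) * (norm x + 1) = M * (norm x + 1) / exp (\<mu> * t)"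
        by (simp add: exp_minus field_simps)
      also have "\<dots> \<le> M * (norm x + 1) / K"
      proof (rule divide_left_mono[OF Kt])
        show "0 \<le> M * (norm x + 1)" using M nx1 by simp
        show "0 < exp (\<mu> * t) * K" using K by simp
      qed
      also have "\<dots> = \<epsilon> / 2"
      proof -
        have cpos: "M * (norm x + 1) > 0" using M nx1 by simp
        show ?thesis unfolding K_def using cpos \<epsilon> M nx1 by (simp add: divide_simps)
      qed
      finally show ?thesis .
    qed
    define \<epsilon>' where "\<epsilon>' = \<epsilon> / exp (\<mu> * T)"
    have \<epsilon>': "\<epsilon>' > 0" using \<epsilon> by (simp add: \<epsilon>'_def)
    obtain \<eta> where \<eta>: "\<eta> > 0" "\<forall>t\<in>{0..T}. \<forall>y\<in>cball x \<eta>. \<forall>\<sigma>\<in>S. norm (\<phi> t x \<sigma> - \<phi> t y \<sigma>) \<le> \<epsilon>'"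
    proof -
      have "T > 0" using T(1) by simp
      then show ?thesis using uc \<epsilon>' that unfolding S_uniformly_continuous_def by blast
    qed
    define d where "d = min (min \<eta> \<epsilon>) 1"
    have d: "d > 0" using \<eta> \<epsilon> by (simp add: d_def)
    show "\<exists>d>0. \<forall>x'\<in>UNIV. dist x' x < d \<longrightarrow> dist (W x') (W x) < e"
    proof (intro exI[of _ d] conjI ballI impI d)
      fix y assume "y \<in> (UNIV :: 'x set)" and dy: "dist y x < d"
      have dd: "d \<le> 1" "d \<le> \<epsilon>" "d \<le> \<eta>" by (simp_all add: d_def)
      have nyx: "norm (y - x) < d" using dy by (simp add: dist_norm)
      have "dist x y \<le> \<eta>" using nyx dd by (simp add: dist_norm norm_minus_commute)
      then have yb: "y \<in> cball x \<eta>" by simp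
      have close: "\<forall>t\<in>{0..T}. \<forall>\<sigma>\<in>S. norm (\<phi> t u \<sigma> - \<phi> t v \<sigma>) \<le> \<epsilon>'"
        "\<bar>norm u - norm v\<bar> \<le> \<epsilon>" "norm u \<le> norm x + 1" "norm v \<le> norm x + 1"
        if "(u = x \<and> v = y) \<or> (u = y \<and> v = x)" for u v
      proof -
        have ny: "norm y \<le> norm x + 1" using nyx dd norm_triangle_ineq2[of y x]
          by linarith
        have "\<bar>norm y - norm x\<bar> \<le> \<epsilon>" using nyx dd norm_triangle_ineq3[of y x]
          by linarith
        then show "\<bar>norm u - norm v\<bar> \<le> \<epsilon>" "norm u \<le> norm x + 1" "norm v \<le> norm x + 1"
          using that ny by auto
        show "\<forall>t\<in>{0..T}. \<forall>\<sigma>\<in>S. norm (\<phi> t u \<sigma> - \<phi> t v \<sigma>) \<le> \<epsilon>'"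
          using that
        proof
          assume "u = x \<and> v = y"
          then show ?thesis using \<eta>(2) yb by blast
        next
          assume "u = y \<and> v = x"
          then show ?thesis using \<eta>(2) yb by (metis norm_minus_commute)
        qed
      qed
      have cmp: "W u \<le> W v + \<epsilon>" if uv: "(u = x \<and> v = y) \<or> (u = y \<and> v = x)" for u v
        unfolding W_def
      proof (rule Sup_compare[OF Ane Ane Abdd], intro ballI)
        fix a assume a: "a \<in> A u"
        from a consider "a = norm u" | t \<sigma> where "t \<ge> 0" "\<sigma> \<in> S" "a = exp (\<mu> * t) * norm (\<phi> t u \<sigma>)"
          unfolding A_def by auto
        then show "\<exists>b\<in>A v. a \<le> b + \<epsilon>"
        proof cases
          case 1 then show ?thesis using close(2)[OF uv] Anorm[of v] by (intro bexI[of _ "norm v"]) auto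
        next
          case (2 t \<sigma>)
          show ?thesis
          proof (intro bexI[OF _ Aelt[OF 2(1,2), of v]])
            show "a \<le> exp (\<mu> * t) * norm (\<phi> t v \<sigma>) + \<epsilon>"
            proof (cases "t \<le> T")
              case True
              have "t \<in> {0..T}" using True 2(1) by simp
              then have "norm (\<phi> t u \<sigma> - \<phi> t v \<sigma>) \<le> \<epsilon>'"
                using close(1)[OF uv] 2(2) by blast
              then have "norm (\<phi> t u \<sigma>) \<le> norm (\<phi> t v \<sigma>) + \<epsilon>'"
                using norm_triangle_ineq2[of "\<phi> t u \<sigma>" "\<phi> t v \<sigma>"] by linarith
              then have "a \<le> exp (\<mu> * t) * (norm (\<phi> t v \<sigma>) + \<epsilon>')"
                using 2 by (simp add: mult_left_mono)
              also have "\<dots> = exp (\<mu> * t) * norm (\<phi> t v \<sigma>) + exp (\<mu> * t) * \<epsilon>'"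
                by (simp add: algebra_simps)
              also have "exp (\<mu> * t) * \<epsilon>' \<le> exp (\<mu> * T) * \<epsilon>'"
                using True \<mu> \<epsilon>' by (intro mult_right_mono) auto
              also have "exp (\<mu> * T) * \<epsilon>' = \<epsilon>" by (simp add: \<epsilon>'_def)
              finally show ?thesis by simp
            next
              case False
              have "a \<le> M * exp (- \<mu> * t) * norm u" using tail[OF 2(1,2)] 2(3) by simp
              also have "\<dots> \<le> M * exp (- \<mu> * t) * (norm x + 1)"
                using close(3)[OF uv] M by (intro mult_left_mono) auto
              also have "\<dots> \<le> \<epsilon> / 2" using tailT False by simp
              finally have "a \<le> \<epsilon> / 2" .
              moreover have "0 \<le> exp (\<mu> * t) * norm (\<phi> t v \<sigma>)" by simp
              ultimately show ?thesis using \<epsilon> by linarith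
            qed
          qed
        qed
      qed
      have "W y \<le> W x + \<epsilon>" "W x \<le> W y + \<epsilon>" using cmp[of y x] cmp[of x y] by simp_all
      then have "dist (W y) (W x) \<le> \<epsilon>" unfolding dist_real_def abs_le_iff by linarith
      then show "dist (W y) (W x) < e" using e by (simp add: \<epsilon>_def)
    qed
  qed
  define V where "V = (\<lambda>x. W x / \<mu>)"
  have lim: "((\<lambda>h. (exp (- \<mu> * h) - 1) / h) \<longlongrightarrow> - \<mu>) (at_right 0)"
  proof -
    have "((\<lambda>h. exp (- \<mu> * h)) has_real_derivative (exp (- \<mu> * 0) * (- \<mu>))) (at 0)"
      by (auto intro!: derivative_eq_intros)
    then have "((\<lambda>h. (exp (- \<mu> * (0 + h)) - exp (- \<mu> * 0)) / h) \<longlongrightarrow> - \<mu>) (at 0)"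
      by (simp add: DERIV_def)
    then show ?thesis by (simp add: filterlim_at_split)
  qed
  have dini: "dini_upper \<phi> V \<sigma> x \<le> ereal (- (norm x powr 1))" if \<sigma>: "\<sigma> \<in> S" for x \<sigma>
  proof -
    have "dini_upper \<phi> V \<sigma> x \<le> Limsup (at_right 0) (\<lambda>h. ereal (W x / \<mu> * ((exp (- \<mu> * h) - 1) / h)))"
      unfolding dini_upper_def
    proof (rule Limsup_mono)
      show "\<forall>\<^sub>F h in at_right 0. ereal ((V (\<phi> h x \<sigma>) - V x) / h) \<le> ereal (W x / \<mu> * ((exp (- \<mu> * h) - 1) / h))"
        unfolding eventually_at_right_field
      proof (intro exI[of _ 1] conjI allI impI)
        fix h :: real assume "0 < h" "h < 1"
        let ?E = "exp (- \<mu> * h)"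
        have "W (\<phi> h x \<sigma>) - W x \<le> W x * (?E - 1)"
          using Wdec[OF \<open>0 < h\<close> \<sigma>, of x] by (simp add: algebra_simps)
        then have "(W (\<phi> h x \<sigma>) - W x) / \<mu> \<le> W x * (?E - 1) / \<mu>"
          using \<mu> by (intro divide_right_mono) auto
        moreover have "V (\<phi> h x \<sigma>) - V x = (W (\<phi> h x \<sigma>) - W x) / \<mu>"
          unfolding V_def by (rule diff_divide_distrib[symmetric])
        ultimately have "V (\<phi> h x \<sigma>) - V x \<le> W x * (?E - 1) / \<mu>" by simp
        then have "(V (\<phi> h x \<sigma>) - V x) / h \<le> (W x * (?E - 1) / \<mu>) / h"
          using \<open>0 < h\<close> by (intro divide_right_mono) auto
        also have "(W x * (?E - 1) / \<mu>) / h = W x / \<mu> * ((?E - 1) / h)" by simp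
        finally show "ereal ((V (\<phi> h x \<sigma>) - V x) / h) \<le> ereal (W x / \<mu> * ((exp (- \<mu> * h) - 1) / h))"
          by simp
      qed simp
    qed
    also have "\<dots> = ereal (W x / \<mu> * (- \<mu>))"
      by (intro lim_imp_Limsup trivial_limit_at_right_real tendsto_ereal tendsto_mult tendsto_const lim)
    also have "\<dots> \<le> ereal (- (norm x powr 1))" using Wge[of x] \<mu> by simp
    finally show ?thesis .
  qed
  have c1: "continuous_on UNIV V" unfolding V_def using \<mu> by (intro continuous_intros Wcont) auto
  have c2: "\<forall>x. V x \<ge> 0"
  proof
    fix x :: 'x
    have "0 \<le> W x" using Wge[of x] norm_ge_zero[of x] by linarith
    then show "0 \<le> V x" using \<mu> by (simp add: V_def)
  qed
  have c3: "\<forall>x. 1 / \<mu> * norm x powr 1 \<le> V x \<and> V x \<le> M' / \<mu> * norm x powr 1"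
  proof
    fix x :: 'x
    have n1: "norm x powr 1 = norm x" by (rule powr_one) simp
    have "norm x / \<mu> \<le> W x / \<mu>" using Wge[of x] \<mu> by (intro divide_right_mono) auto
    moreover have "W x / \<mu> \<le> (M' * norm x) / \<mu>" using Wle[of x] \<mu> by (intro divide_right_mono) auto
    ultimately show "1 / \<mu> * norm x powr 1 \<le> V x \<and> V x \<le> M' / \<mu> * norm x powr 1"
      unfolding n1 V_def by simp
  qed
  have c4: "\<forall>x. \<forall>\<sigma>\<in>S. dini_upper \<phi> V \<sigma> x \<le> ereal (- (norm x powr 1))" using dini by blast
  have pos: "(0::real) < 1" "0 < 1 / \<mu>" "0 < M' / \<mu>" using \<mu> M' by auto
  show ?thesis
    apply (rule exI[of _ V])
    apply (rule exI[of _ "1::real"])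
    apply (rule conjI[OF pos(1)])
    apply (rule exI[of _ "1 / \<mu>"])
    apply (rule conjI[OF pos(2)])
    apply (rule exI[of _ "M' / \<mu>"])
    apply (rule conjI[OF pos(3)])
    using c1 c2 c3 c4 by blast
qed


lemma ii_implies_iii:
  fixes \<phi> :: "real \<Rightarrow> 'x::banach \<Rightarrow> (real \<Rightarrow> 'q) \<Rightarrow> 'x"
  assumes sys: "forward_complete_system S \<phi>"
    and ii: "\<exists>V :: 'x \<Rightarrow> real. \<exists>p>0. \<exists>cl>0. \<exists>cu>0.
              continuous_on UNIV V \<and> (\<forall>x. V x \<ge> 0) \<and>
              (\<forall>x. cl * norm x powr p \<le> V x \<and> V x \<le> cu * norm x powr p) \<and>
              (\<forall>x. \<forall>\<sigma>\<in>S. dini_upper \<phi> V \<sigma> x \<le> ereal (- (norm x powr p)))"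
  shows "\<exists>V :: 'x \<Rightarrow> real. \<exists>p>0. \<exists>c>0.
              (\<forall>x. V x \<ge> 0) \<and>
              (\<forall>x. \<forall>\<sigma>\<in>S. \<forall>t>0. ((\<lambda>s. V (\<phi> s x \<sigma>)) \<longlongrightarrow> V (\<phi> t x \<sigma>)) (at_left t)) \<and>
              (\<forall>x. \<forall>\<sigma>\<in>S. dini_upper \<phi> V \<sigma> x \<le> ereal (- (norm x powr p))) \<and>
              (\<forall>x. V x \<le> c * norm x powr p)"
proof -
  obtain V p cl cu where p: "p > 0" and cu: "cu > 0" and Vc: "continuous_on UNIV V"
    and Vnn: "\<forall>x. V x \<ge> 0" and Vb: "\<forall>x. cl * norm x powr p \<le> V x \<and> V x \<le> cu * norm x powr p"
    and dini: "\<forall>x. \<forall>\<sigma>\<in>S. dini_upper \<phi> V \<sigma> x \<le> ereal (- (norm x powr p))"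
    using ii by blast
  have lc: "((\<lambda>s. V (\<phi> s x \<sigma>)) \<longlongrightarrow> V (\<phi> t x \<sigma>)) (at_left t)"
    if \<sigma>: "\<sigma> \<in> S" and t: "t > 0" for x \<sigma> t
  proof -
    have "continuous_on {0..} (\<lambda>s. V (\<phi> s x \<sigma>))"
      using continuous_on_compose2[OF Vc sys_facts(5)[OF sys \<sigma>, of x]] by simp
    then have "isCont (\<lambda>s. V (\<phi> s x \<sigma>)) t"
      by (rule continuous_on_interior) (use t in simp)
    then show ?thesis by (simp add: isCont_def filterlim_at_split)
  qed
  have "\<forall>x. V x \<le> cu * norm x powr p" using Vb by blast
  then show ?thesis using p cu Vnn lc dini by blast
qed

theorem corollary1:
  fixes S :: "(real \<Rightarrow> 'q) set"
    and \<phi> :: "real \<Rightarrow> 'x::banach \<Rightarrow> (real \<Rightarrow> 'q) \<Rightarrow> 'x"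
  assumes sys: "forward_complete_system S \<phi>"
    and uc: "S_uniformly_continuous S \<phi>"
    and bnd: "\<exists>t1>0. \<exists>G0>0. \<forall>t\<in>{0..t1}. \<forall>x. \<forall>\<sigma>\<in>S. norm (\<phi> t x \<sigma>) \<le> G0 * norm x"
  shows "(UGES S \<phi> \<longleftrightarrow>
           (\<exists>V :: 'x \<Rightarrow> real. \<exists>p>0. \<exists>cl>0. \<exists>cu>0.
              continuous_on UNIV V \<and> (\<forall>x. V x \<ge> 0) \<and>
              (\<forall>x. cl * norm x powr p \<le> V x \<and> V x \<le> cu * norm x powr p) \<and>
              (\<forall>x. \<forall>\<sigma>\<in>S. dini_upper \<phi> V \<sigma> x \<le> ereal (- (norm x powr p)))))
       \<and> (UGES S \<phi> \<longleftrightarrow>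
           (\<exists>V :: 'x \<Rightarrow> real. \<exists>p>0. \<exists>c>0.
              (\<forall>x. V x \<ge> 0) \<and>
              (\<forall>x. \<forall>\<sigma>\<in>S. \<forall>t>0. ((\<lambda>s. V (\<phi> s x \<sigma>)) \<longlongrightarrow> V (\<phi> t x \<sigma>)) (at_left t)) \<and>
              (\<forall>x. \<forall>\<sigma>\<in>S. dini_upper \<phi> V \<sigma> x \<le> ereal (- (norm x powr p))) \<and>
              (\<forall>x. V x \<le> c * norm x powr p)))"
proof -
  obtain t1 G0 where t1: "t1 > 0" and G0: "G0 > 0"
    and b: "\<forall>t\<in>{0..t1}. \<forall>x. \<forall>\<sigma>\<in>S. norm (\<phi> t x \<sigma>) \<le> G0 * norm x"
    using bnd by blast
  have iii_i: "UGES S \<phi>" if H: "\<exists>V :: 'x \<Rightarrow> real. \<exists>p>0. \<exists>c>0.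
              (\<forall>x. V x \<ge> 0) \<and>
              (\<forall>x. \<forall>\<sigma>\<in>S. \<forall>t>0. ((\<lambda>s. V (\<phi> s x \<sigma>)) \<longlongrightarrow> V (\<phi> t x \<sigma>)) (at_left t)) \<and>
              (\<forall>x. \<forall>\<sigma>\<in>S. dini_upper \<phi> V \<sigma> x \<le> ereal (- (norm x powr p))) \<and>
              (\<forall>x. V x \<le> c * norm x powr p)"
  proof -
    obtain V :: "'x \<Rightarrow> real" and p c where "p > 0" "c > 0" "\<forall>x. V x \<ge> 0"
      "\<forall>x. \<forall>\<sigma>\<in>S. \<forall>t>0. ((\<lambda>s. V (\<phi> s x \<sigma>)) \<longlongrightarrow> V (\<phi> t x \<sigma>)) (at_left t)"
      "\<forall>x. \<forall>\<sigma>\<in>S. dini_upper \<phi> V \<sigma> x \<le> ereal (- (norm x powr p))"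
      "\<forall>x. V x \<le> c * norm x powr p"
      using H by blast
    then show ?thesis using iii_implies_i[OF sys t1 G0 b] by blast
  qed
  show ?thesis
    using i_implies_ii[OF sys uc] ii_implies_iii[OF sys] iii_i by blast
qed

end
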